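(* For every signaling scheme $\mathcal{Z}$ for $\mathcal{D}$ there exists an efficient signaling scheme $\mathcal{Z}^E$ for $\mathcal{D}$ such that: (1) $cs_{v_i}(\mathcal{Z}^E)=cs_{v_i}(\mathcal{Z})$ for every $i\in[n]$; (2) $\mathcal{Z}^E$ consists of at most $n$ signals, whose lowest supports (smallest values with nonzero mass) are pairwise distinct.
   Context: Values and prior. $0<v_1<\dots<v_n$ are reals, and $\mathcal{D}$ is a distribution on $\{v_1,\dots,v_n\}$ with $f_{\mathcal{D}}(v_i)>0$. Signals and pricing. A signal is a distribution $S$ on these values, with $G_S(p)=\Pr_{v\sim S}[v\ge p]$. The seller posts $p^*_S$, the smallest $v$ in the support of $S$ maximizing $v\,G_S(v)$. The surplus of value $v$ is $cs_v(S)=\mathbb{1}[v\ge p^*_S](v-p^*_S)$. Signaling schemes. A signaling scheme is $\mathcal{Z}=\{(S_q,\gamma_q)\}$ with $\gamma_q\ge0$, $\sum\gamma_q=1$ and $\sum_q\gamma_q f_{S_q}=f_{\mathcal{D}}$. Its expected consumer surplus at $v_i$ is $cs_{v_i}(\mathcal{Z})=\sum_q cs_{v_i}(S_q)\gamma_q f_{S_q}(v_i)/f_{\mathcal{D}}(v_i)$. The scheme is efficient if for every signal $S_q$, $p^*_{S_q}$ is the smallest value in the support of $S_q$. *)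

theory Defs
  imports Main "HOL-Library.Multiset" Complex_Main
begin

text \<open>Values are indexed by 0..<n: v 0 < v 1 < ... < v (n-1). A distribution on the
values (prior or signal) is a function on indices.\<close>

definition valid_values :: "nat \<Rightarrow> (nat \<Rightarrow> real) \<Rightarrow> bool" where
  "valid_values n v \<longleftrightarrow> (\<forall>i<n. 0 < v i) \<and> (\<forall>i j. i < j \<longrightarrow> j < n \<longrightarrow> v i < v j)"

definition is_dist :: "nat \<Rightarrow> (nat \<Rightarrow> real) \<Rightarrow> bool" where
  "is_dist n S \<longleftrightarrow> (\<forall>i<n. 0 \<le> S i) \<and> (\<Sum>i<n. S i) = 1"

definition prior :: "nat \<Rightarrow> (nat \<Rightarrow> real) \<Rightarrow> bool" where
  "prior n f \<longleftrightarrow> is_dist n f \<and> (\<forall>i<n. 0 < f i)"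

definition supp :: "nat \<Rightarrow> (nat \<Rightarrow> real) \<Rightarrow> nat set" where
  "supp n S = {i. i < n \<and> 0 < S i}"

definition G :: "nat \<Rightarrow> (nat \<Rightarrow> real) \<Rightarrow> (nat \<Rightarrow> real) \<Rightarrow> real \<Rightarrow> real" where
  "G n v S p = (\<Sum>i\<in>{i. i < n \<and> p \<le> v i}. S i)"

definition price_idx :: "nat \<Rightarrow> (nat \<Rightarrow> real) \<Rightarrow> (nat \<Rightarrow> real) \<Rightarrow> nat" where
  "price_idx n v S = (LEAST i. i \<in> supp n S \<and>
      (\<forall>j\<in>supp n S. v j * G n v S (v j) \<le> v i * G n v S (v i)))"

definition price :: "nat \<Rightarrow> (nat \<Rightarrow> real) \<Rightarrow> (nat \<Rightarrow> real) \<Rightarrow> real" where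
  "price n v S = v (price_idx n v S)"

definition cs_sig :: "nat \<Rightarrow> (nat \<Rightarrow> real) \<Rightarrow> (nat \<Rightarrow> real) \<Rightarrow> nat \<Rightarrow> real" where
  "cs_sig n v S i = (if price n v S \<le> v i then v i - price n v S else 0)"

type_synonym scheme = "((nat \<Rightarrow> real) \<times> real) list"

definition is_scheme :: "nat \<Rightarrow> (nat \<Rightarrow> real) \<Rightarrow> scheme \<Rightarrow> bool" where
  "is_scheme n f Z \<longleftrightarrow>
     (\<forall>(S, \<gamma>) \<in> set Z. is_dist n S \<and> 0 \<le> \<gamma>) \<and>
     (\<Sum>(S, \<gamma>) \<leftarrow> Z. \<gamma>) = 1 \<and>
     (\<forall>i<n. (\<Sum>(S, \<gamma>) \<leftarrow> Z. \<gamma> * S i) = f i)"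

definition cs_scheme :: "nat \<Rightarrow> (nat \<Rightarrow> real) \<Rightarrow> (nat \<Rightarrow> real) \<Rightarrow> scheme \<Rightarrow> nat \<Rightarrow> real" where
  "cs_scheme n v f Z i = (\<Sum>(S, \<gamma>) \<leftarrow> Z. cs_sig n v S i * \<gamma> * S i / f i)"

definition low :: "nat \<Rightarrow> (nat \<Rightarrow> real) \<Rightarrow> nat" where
  "low n S = Min (supp n S)"

definition efficient :: "nat \<Rightarrow> (nat \<Rightarrow> real) \<Rightarrow> scheme \<Rightarrow> bool" where
  "efficient n v Z \<longleftrightarrow> (\<forall>(S, \<gamma>) \<in> set Z. price_idx n v S = low n S)"

end

theory Submission
  imports Defs
begin

lemma sl: "sum_list (map h xs) = (\<Sum>q<length xs. h (xs!q))"
  by (simp add: sum_list_sum_nth atLeast0LessThan)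

lemma slf: "sum_list (map h (filter P [0..<n])) = (\<Sum>l<n. if P l then h l else 0)"
  by (simp add: sum_list_distinct_conv_sum_set sum.inter_filter[symmetric] lessThan_def)

lemma vmono:
  assumes "valid_values n v" "i < n" "j < n"
  shows "v i \<le> v j \<longleftrightarrow> i \<le> j"
proof -
  have m: "\<And>a b. a < b \<Longrightarrow> b < n \<Longrightarrow> v a < v b" using assms(1) unfolding valid_values_def by blast
  show ?thesis
  proof (cases "i < j")
    case True then show ?thesis using m[of i j] assms by auto
  next
    case False
    then show ?thesis using m[of j i] assms by (cases "i = j") auto
  qed
qed

lemma G_idx:
  assumes "valid_values n v" "j < n"
  shows "G n v S (v j) = sum S {j..<n}"
proof -
  have "{i. i < n \<and> v j \<le> v i} = {j..<n}" using vmono[OF assms(1) assms(2)] by auto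
  then show ?thesis unfolding G_def by simp
qed

lemma price_prop:
  assumes vv: "valid_values n v" and d: "is_dist n S"
  shows "price_idx n v S \<in> supp n S \<and>
    (\<forall>j<n. v j * sum S {j..<n} \<le> v (price_idx n v S) * sum S {price_idx n v S..<n})"
proof -
  let ?r = "\<lambda>j. v j * G n v S (v j)"
  have fin: "finite (supp n S)" unfolding supp_def by auto
  have nn: "\<And>i. i < n \<Longrightarrow> 0 \<le> S i" using d unfolding is_dist_def by auto
  have "supp n S \<noteq> {}"
  proof
    assume "supp n S = {}"
    then have "\<And>i. i < n \<Longrightarrow> S i = 0" using nn unfolding supp_def by force
    then have "(\<Sum>i<n. S i) = 0" by simp
    then show False using d unfolding is_dist_def by simp
  qed
  then have "Max (?r ` supp n S) \<in> ?r ` supp n S" using fin by (intro Max_in) auto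
  then obtain a where a: "a \<in> supp n S" "?r a = Max (?r ` supp n S)" by auto
  have "\<forall>j\<in>supp n S. ?r j \<le> ?r a" using a fin by auto
  then have ex: "\<exists>i. i \<in> supp n S \<and> (\<forall>j\<in>supp n S. ?r j \<le> ?r i)" using a by blast
  define P where "P = price_idx n v S"
  have PP: "P \<in> supp n S \<and> (\<forall>j\<in>supp n S. ?r j \<le> ?r P)"
    unfolding P_def price_idx_def by (rule LeastI_ex[OF ex])
  have Pn: "P < n" using PP unfolding supp_def by auto
  define R where "R = v P * sum S {P..<n}"
  have R0: "0 \<le> R" unfolding R_def using vv Pn nn unfolding valid_values_def
    by (intro mult_nonneg_nonneg sum_nonneg) auto
  have supbound: "\<And>j. j \<in> supp n S \<Longrightarrow> v j * sum S {j..<n} \<le> R"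
  proof -
    fix j assume j: "j \<in> supp n S"
    then have "j < n" unfolding supp_def by auto
    then show "v j * sum S {j..<n} \<le> R" using PP j unfolding R_def
      using G_idx[OF vv \<open>j<n\<close>] G_idx[OF vv Pn] by auto
  qed
  have main: "j \<le> n \<Longrightarrow> j < n \<longrightarrow> v j * sum S {j..<n} \<le> R" for j
  proof (induction j rule: inc_induct)
    case base then show ?case by simp
  next
    case (step k)
    show ?case
    proof
      assume kn: "k < n"
      show "v k * sum S {k..<n} \<le> R"
      proof (cases "k \<in> supp n S")
        case True then show ?thesis using supbound by auto
      next
        case False
        then have Sk: "S k = 0" using nn[OF kn] unfolding supp_def using kn by auto
        have eq: "sum S {k..<n} = sum S {Suc k..<n}"
          using kn Sk by (simp add: sum.atLeast_Suc_lessThan)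
        show ?thesis
        proof (cases "Suc k = n")
          case True then show ?thesis using eq R0 by simp
        next
          case False
          then have sk: "Suc k < n" using kn by auto
          have s0: "0 \<le> sum S {Suc k..<n}" using nn by (intro sum_nonneg) auto
          have "v k < v (Suc k)" using vv sk unfolding valid_values_def by auto
          then have "v k * sum S {Suc k..<n} \<le> v (Suc k) * sum S {Suc k..<n}"
            using s0 by (intro mult_right_mono) auto
          also have "\<dots> \<le> R" using step.IH sk by auto
          finally show ?thesis using eq by simp
        qed
      qed
    qed
  qed
  show ?thesis using PP main unfolding P_def[symmetric] R_def by auto
qed

theorem lemma9:
  fixes n :: nat and v f :: "nat \<Rightarrow> real" and Z :: scheme
  assumes "valid_values n v" and "prior n f" and "is_scheme n f Z"
  shows "\<exists>ZE. is_scheme n f ZE \<and> efficient n v ZE \<and>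
           (\<forall>i<n. cs_scheme n v f ZE i = cs_scheme n v f Z i) \<and>
           length ZE \<le> n \<and> distinct (map (\<lambda>(S, \<gamma>). low n S) ZE)"
proof -
  note vv = assms(1)
  define m where "m = length Z"
  define S where "S q = fst (Z!q)" for q
  define g where "g q = snd (Z!q)" for q
  define P where "P q = price_idx n v (S q)" for q
  define x where "x l i = (\<Sum>q<m. if min (P q) i = l then g q * S q i else 0)" for l i
  define w where "w l = (\<Sum>i<n. x l i)" for l
  define T where "T l = (\<lambda>i. x l i / w l)" for l
  define ZE where "ZE = map (\<lambda>l. (T l, w l)) (filter (\<lambda>l. 0 < w l) [0..<n])"
  have Zq: "\<And>q. q < m \<Longrightarrow> Z!q = (S q, g q)" unfolding S_def g_def by simp
  have Zd: "\<And>q. q < m \<Longrightarrow> is_dist n (S q) \<and> 0 \<le> g q"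
  proof -
    fix q assume q: "q < m"
    then have "Z!q \<in> set Z" unfolding m_def by simp
    then show "is_dist n (S q) \<and> 0 \<le> g q" using assms(3) Zq[OF q] unfolding is_scheme_def by auto
  qed
  have Snn: "\<And>q i. q < m \<Longrightarrow> i < n \<Longrightarrow> 0 \<le> S q i" using Zd unfolding is_dist_def by auto
  have gnn: "\<And>q. q < m \<Longrightarrow> 0 \<le> g q" using Zd by auto
  have Pp: "\<And>q. q < m \<Longrightarrow> P q \<in> supp n (S q) \<and>
    (\<forall>j<n. v j * sum (S q) {j..<n} \<le> v (P q) * sum (S q) {P q..<n})"
    unfolding P_def using price_prop[OF vv] Zd by blast
  have Pn: "\<And>q. q < m \<Longrightarrow> P q < n" using Pp unfolding supp_def by auto
  have fZ: "\<And>i. i < n \<Longrightarrow> f i = (\<Sum>q<m. g q * S q i)"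
  proof -
    fix i assume "i < n"
    then have "f i = (\<Sum>(S, \<gamma>) \<leftarrow> Z. \<gamma> * S i)" using assms(3) unfolding is_scheme_def by auto
    also have "\<dots> = (\<Sum>q<m. g q * S q i)" unfolding sl m_def
      by (intro sum.cong) (auto simp: Zq[unfolded m_def])
    finally show "f i = (\<Sum>q<m. g q * S q i)" .
  qed
  have xnn: "\<And>l i. i < n \<Longrightarrow> 0 \<le> x l i" unfolding x_def using Snn gnn
    by (intro sum_nonneg) auto
  have xlow: "\<And>l i. i < l \<Longrightarrow> x l i = 0" unfolding x_def by (intro sum.neutral) auto
  have xsum: "\<And>i. i < n \<Longrightarrow> (\<Sum>l<n. x l i) = f i"
  proof -
    fix i assume i: "i < n"
    have "(\<Sum>l<n. x l i) = (\<Sum>q<m. \<Sum>l<n. if min (P q) i = l then g q * S q i else 0)"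
      unfolding x_def by (rule sum.swap)
    also have "\<dots> = (\<Sum>q<m. g q * S q i)"
      using i by (intro sum.cong) (auto simp: sum.delta)
    finally show "(\<Sum>l<n. x l i) = f i" using fZ[OF i] by simp
  qed
  have wnn: "\<And>l. 0 \<le> w l" unfolding w_def using xnn by (intro sum_nonneg) auto
  have w0: "\<And>l i. w l = 0 \<Longrightarrow> i < n \<Longrightarrow> x l i = 0"
  proof -
    fix l i assume "w l = 0" "i < n"
    then show "x l i = 0" using sum_nonneg_eq_0_iff[of "{..<n}" "x l"] xnn unfolding w_def by auto
  qed
  have wsum: "(\<Sum>l<n. w l) = 1"
  proof -
    have "(\<Sum>l<n. w l) = (\<Sum>i<n. \<Sum>l<n. x l i)" unfolding w_def by (rule sum.swap)
    also have "\<dots> = (\<Sum>i<n. f i)" using xsum by simp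
    finally show ?thesis using assms(2) unfolding prior_def is_dist_def by simp
  qed
  have xll: "\<And>l. l < n \<Longrightarrow> 0 < w l \<Longrightarrow> 0 < x l l"
  proof -
    fix l assume ln: "l < n" and wp: "0 < w l"
    obtain i where i: "i < n" "0 < x l i"
      using wp xnn unfolding w_def by (metis (no_types, lifting) lessThan_iff not_less sum_nonpos)
    obtain q where q: "q < m" "0 < (if min (P q) i = l then g q * S q i else 0)"
      using i(2) unfolding x_def by (metis (no_types, lifting) lessThan_iff not_less sum_nonpos)
    have mq: "min (P q) i = l" and gs: "0 < g q * S q i" using q(2) by (auto split: if_splits)
    have gp: "0 < g q" using gs gnn[OF q(1)] Snn[OF q(1) i(1)]
      by (metis less_eq_real_def mult_eq_0_iff)
    have trm: "0 < g q * S q l"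
    proof (cases "P q \<le> i")
      case True
      then have "l = P q" using mq by auto
      then have "0 < S q l" using Pp[OF q(1)] unfolding supp_def by auto
      then show ?thesis using gp by simp
    next
      case False then have "l = i" using mq by auto
      then show ?thesis using gs by simp
    qed
    have "g q * S q l = (if min (P q) l = l then g q * S q l else 0)"
      using mq by auto
    also have "\<dots> \<le> x l l" unfolding x_def
      using q(1) gnn Snn ln by (intro member_le_sum) auto
    finally show "0 < x l l" using trm by simp
  qed
  have wsplit: "\<And>l. l < n \<Longrightarrow> w l = sum (x l) {l..<n}"
  proof -
    fix l assume "l < n"
    have "{..<n} = {..<l} \<union> {l..<n}" using \<open>l < n\<close> by auto
    moreover have "sum (x l) ({..<l} \<union> {l..<n}) = sum (x l) {..<l} + sum (x l) {l..<n}"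
      by (rule sum.union_disjoint) auto
    ultimately have "w l = sum (x l) {..<l} + sum (x l) {l..<n}" unfolding w_def by simp
    then show "w l = sum (x l) {l..<n}" using xlow by simp
  qed
  have rev: "\<And>l j. l \<le> j \<Longrightarrow> j < n \<Longrightarrow> v j * sum (x l) {j..<n} \<le> v l * w l"
  proof -
    fix l j assume lj: "l \<le> j" and jn: "j < n"
    show "v j * sum (x l) {j..<n} \<le> v l * w l"
    proof (cases "l = j")
      case True then show ?thesis using wsplit jn by simp
    next
      case False
      then have lj': "l < j" using lj by auto
      have vl: "0 < v l" using vv lj' jn unfolding valid_values_def by auto
      have "sum (x l) {j..<n} = (\<Sum>i\<in>{j..<n}. \<Sum>q<m. if P q = l then g q * S q i else 0)"
        unfolding x_def using lj' by (intro sum.cong refl) (auto simp: min_def)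
      also have "\<dots> = (\<Sum>q<m. \<Sum>i\<in>{j..<n}. if P q = l then g q * S q i else 0)"
        by (rule sum.swap)
      also have "\<dots> = (\<Sum>q<m. if P q = l then g q * sum (S q) {j..<n} else 0)"
        by (intro sum.cong refl) (auto simp: sum_distrib_left)
      finally have e1: "v j * sum (x l) {j..<n} = (\<Sum>q<m. if P q = l then g q * (v j * sum (S q) {j..<n}) else 0)"
        by (simp add: sum_distrib_left, intro sum.cong, auto)
      also have "\<dots> \<le> (\<Sum>q<m. if P q = l then g q * (v l * sum (S q) {l..<n}) else 0)"
      proof (intro sum_mono)
        fix q assume "q \<in> {..<m}"
        then have q: "q < m" by simp
        show "(if P q = l then g q * (v j * sum (S q) {j..<n}) else 0) \<le> (if P q = l then g q * (v l * sum (S q) {l..<n}) else 0)"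
          using Pp[OF q] jn gnn[OF q] by (auto intro: mult_left_mono)
      qed
      also have "\<dots> = v l * (\<Sum>i\<in>{l..<n}. \<Sum>q<m. if P q = l then g q * S q i else 0)"
        by (subst sum.swap, simp add: sum_distrib_left, intro sum.cong, auto simp: sum_distrib_left mult.left_commute)
      also have "\<dots> \<le> v l * sum (x l) {l..<n}"
      proof (unfold x_def, intro mult_left_mono sum_mono)
        fix i q assume i: "i \<in> {l..<n}" and q: "q \<in> {..<m}"
        show "(if P q = l then g q * S q i else 0) \<le> (if min (P q) i = l then g q * S q i else 0)"
          using i q gnn Snn by (auto simp: min_def)
      qed (use vl in auto)
      finally show ?thesis using wsplit jn lj by simp
    qed
  qed
  have Tnn: "\<And>l i. i < n \<Longrightarrow> 0 \<le> T l i" unfolding T_def using xnn wnn by simp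
  have Tdist: "\<And>l. l < n \<Longrightarrow> 0 < w l \<Longrightarrow> is_dist n (T l)"
  proof -
    fix l assume "l < n" "0 < w l"
    have "(\<Sum>i<n. T l i) = w l / w l" unfolding T_def by (simp add: sum_divide_distrib[symmetric] w_def)
    then show "is_dist n (T l)" unfolding is_dist_def using Tnn \<open>0 < w l\<close> by simp
  qed
  have suppT: "\<And>l. 0 < w l \<Longrightarrow> supp n (T l) = {i. i < n \<and> 0 < x l i}"
    unfolding supp_def T_def by (auto simp: divide_pos_pos zero_less_divide_iff)
  have GT: "\<And>l j. j < n \<Longrightarrow> G n v (T l) (v j) = sum (x l) {j..<n} / w l"
    using G_idx[OF vv] unfolding T_def by (simp add: sum_divide_distrib)
  have priceT: "\<And>l. l < n \<Longrightarrow> 0 < w l \<Longrightarrow> price_idx n v (T l) = l"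
  proof -
    fix l assume ln: "l < n" and wp: "0 < w l"
    have ge: "\<And>j. j \<in> supp n (T l) \<Longrightarrow> l \<le> j \<and> j < n"
    proof -
      fix j assume "j \<in> supp n (T l)"
      then have "j < n" "0 < x l j" using suppT[OF wp] by auto
      then show "l \<le> j \<and> j < n" using xlow by (metis less_irrefl not_le)
    qed
    have lin: "l \<in> supp n (T l)" using suppT[OF wp] xll[OF ln wp] ln by auto
    have Gl: "G n v (T l) (v l) = 1" using GT[OF ln] wsplit[OF ln] wp by simp
    show "price_idx n v (T l) = l" unfolding price_idx_def
    proof (rule Least_equality)
      show "l \<in> supp n (T l) \<and> (\<forall>j\<in>supp n (T l). v j * G n v (T l) (v j) \<le> v l * G n v (T l) (v l))"
      proof (intro conjI ballI lin)
        fix j assume j: "j \<in> supp n (T l)"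
        have "v j * sum (x l) {j..<n} \<le> v l * w l" using rev ge[OF j] by auto
        then have "v j * sum (x l) {j..<n} / w l \<le> v l" using wp by (simp add: pos_divide_le_eq)
        then show "v j * G n v (T l) (v j) \<le> v l * G n v (T l) (v l)"
          using GT ge[OF j] Gl by simp
      qed
    qed (use ge in auto)
  qed
  have lowT: "\<And>l. l < n \<Longrightarrow> 0 < w l \<Longrightarrow> low n (T l) = l"
  proof -
    fix l assume ln: "l < n" and wp: "0 < w l"
    show "low n (T l) = l" unfolding low_def
    proof (rule Min_eqI)
      show "finite (supp n (T l))" unfolding supp_def by auto
      show "l \<in> supp n (T l)" using suppT[OF wp] xll[OF ln wp] ln by auto
      fix j assume "j \<in> supp n (T l)"
      then have "j < n" "0 < x l j" using suppT[OF wp] by auto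
      then show "l \<le> j" using xlow by (metis less_irrefl not_le)
    qed
  qed
  have csT: "\<And>l i. l < n \<Longrightarrow> 0 < w l \<Longrightarrow> i < n \<Longrightarrow> cs_sig n v (T l) i = (if l \<le> i then v i - v l else 0)"
    unfolding cs_sig_def price_def using priceT vmono[OF vv] by auto
  have csS: "\<And>q i. q < m \<Longrightarrow> i < n \<Longrightarrow> cs_sig n v (S q) i = (if P q \<le> i then v i - v (P q) else 0)"
    unfolding cs_sig_def price_def P_def[symmetric] using Pn vmono[OF vv] by auto
  have ZEset: "set ZE = (\<lambda>l. (T l, w l)) ` {l. l < n \<and> 0 < w l}" unfolding ZE_def by auto
  have sch: "is_scheme n f ZE"
    unfolding is_scheme_def
  proof (intro conjI allI impI)
    show "\<forall>(S, \<gamma>)\<in>set ZE. is_dist n S \<and> 0 \<le> \<gamma>" unfolding ZEset using Tdist by auto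
    have "(\<Sum>(S, \<gamma>)\<leftarrow>ZE. \<gamma>) = (\<Sum>l<n. if 0 < w l then w l else 0)"
      unfolding ZE_def by (simp add: slf comp_def)
    also have "\<dots> = (\<Sum>l<n. w l)" using wnn by (intro sum.cong) (auto simp: less_le)
    finally show "(\<Sum>(S, \<gamma>)\<leftarrow>ZE. \<gamma>) = 1" using wsum by simp
    fix i assume i: "i < n"
    have "(\<Sum>(S, \<gamma>)\<leftarrow>ZE. \<gamma> * S i) = (\<Sum>l<n. if 0 < w l then w l * T l i else 0)"
      unfolding ZE_def by (simp add: slf comp_def)
    also have "\<dots> = (\<Sum>l<n. x l i)" unfolding T_def using w0 i wnn
      by (intro sum.cong) (auto simp: less_le)
    finally show "(\<Sum>(S, \<gamma>)\<leftarrow>ZE. \<gamma> * S i) = f i" using xsum[OF i] by simp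
  qed
  have eff: "efficient n v ZE" unfolding efficient_def ZEset using priceT lowT by auto
  have cs: "\<forall>i<n. cs_scheme n v f ZE i = cs_scheme n v f Z i"
  proof (intro allI impI)
    fix i assume i: "i < n"
    define c where "c l = (if l \<le> i then v i - v l else 0)" for l
    have "cs_scheme n v f ZE i = (\<Sum>l<n. if 0 < w l then cs_sig n v (T l) i * w l * T l i / f i else 0)"
      unfolding cs_scheme_def ZE_def by (simp add: slf comp_def)
    also have "\<dots> = (\<Sum>l<n. c l * x l i / f i)"
    proof (intro sum.cong refl)
      fix l assume "l \<in> {..<n}"
      then have ln: "l < n" by simp
      show "(if 0 < w l then cs_sig n v (T l) i * w l * T l i / f i else 0) = c l * x l i / f i"
      proof (cases "0 < w l")
        case True
        then show ?thesis using csT[OF ln True i] unfolding c_def T_def by simp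
      next
        case False
        then have "w l = 0" using wnn[of l] by simp
        then show ?thesis using w0 i False by simp
      qed
    qed
    also have "\<dots> = (\<Sum>l<n. \<Sum>q<m. if min (P q) i = l then c (min (P q) i) * g q * S q i / f i else 0)"
      unfolding x_def by (intro sum.cong refl) (auto simp: sum_distrib_left sum_divide_distrib intro!: sum.cong)
    also have "\<dots> = (\<Sum>q<m. \<Sum>l<n. if min (P q) i = l then c (min (P q) i) * g q * S q i / f i else 0)"
      by (rule sum.swap)
    also have "\<dots> = (\<Sum>q<m. c (min (P q) i) * g q * S q i / f i)"
      using i by (intro sum.cong) (auto simp: sum.delta)
    also have "\<dots> = (\<Sum>q<m. cs_sig n v (S q) i * g q * S q i / f i)"
      using csS i unfolding c_def by (intro sum.cong) (auto simp: min_def)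
    also have "\<dots> = cs_scheme n v f Z i"
      unfolding cs_scheme_def sl m_def by (intro sum.cong) (auto simp: Zq[unfolded m_def])
    finally show "cs_scheme n v f ZE i = cs_scheme n v f Z i" .
  qed
  have len: "length ZE \<le> n" unfolding ZE_def
    by (metis diff_zero length_filter_le length_map length_upt)
  have "map (\<lambda>(S, \<gamma>). low n S) ZE = map (\<lambda>l. l) (filter (\<lambda>l. 0 < w l) [0..<n])"
    unfolding ZE_def using lowT by (simp add: comp_def, intro map_idI, auto)
  then have dis: "distinct (map (\<lambda>(S, \<gamma>). low n S) ZE)" by simp
  show ?thesis using sch eff cs len dis by blast
qed

end
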